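(* In the setting of the context, suppose the algorithm described there terminates after $N$ steps, i.e. $CB^{(N)}=0$. Then the returned matrix $B$ (the non-zero columns of $B^{(N)}$) represents a partition of unity: every row of $B$ sums to $1$.
   Context: Multi-patch setting: $\Omega\subset\mathbb{R}^2$ is the union of closures of $K$ pairwise disjoint patches $\Omega_k=G_k((0,1)^2)$; on each patch there is a local basis $\Phi^{(k)}=(\phi_i^{(k)})_{i=1}^{n^{(k)}}$ obtained by mapping tensor-product B-splines (degree $p$, open knot vectors) via $G_k$. Any two patches sharing an edge $\Gamma_{k,\ell}=\partial\Omega_k\cap\partial\Omega_\ell$ (of positive length) have nested trace spaces; the closures of two patches intersect in the empty set, a vertex of at least one of them, or an edge of at least one of them; and any two patches meeting at a T-junction share an edge. Let $n^{(pw)}=\sum_kn^{(k)}$ and index the concatenated coefficient vector $\underline u_h=(\underline u_h^{(1)},\ldots,\underline u_h^{(K)})\in\mathbb{R}^{n^{(pw)}}$. Constraint matrix $C$: for every pair of patches $\Omega_k,\Omega_\ell$ sharing an edge $\Gamma$ with $V_h^{(k)}|_\Gamma\subseteq V_h^{(\ell)}|_\Gamma$, and every $i$ with $\phi_i^{(k)}|_\Gamma\not\equiv0$, write $\phi_i^{(k)}=\sum_jE^{(k,\ell)}_{i,j}\phi_j^{(\ell)}$ on $\Gamma$ with nonnegative coefficients with row sums $1$ (knot insertion); then $C$ has a row representing $u_i^{(k)}-\sum_jE^{(k,\ell)}_{i,j}u_j^{(\ell)}=0$. For a matrix $D$ and row $m$ define $\mathcal F_m(D)=\{n: D_{m,n}\ne0,\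 D_{m,n}D_{m,j}\le0\ \forall j\ne n\}$. Algorithm: $B^{(0)}=I$; for $\nu=1,2,\ldots$ until $CB^{(\nu)}=0$: choose $m_\nu,n_\nu$ with $n_\nu\in\mathcal F_{m_\nu}(CB^{(\nu-1)})$, set $R^{(\nu)}=I-\frac{1}{e_{m_\nu}^\top CB^{(\nu-1)}e_{n_\nu}}e_{n_\nu}e_{m_\nu}^\top CB^{(\nu-1)}$, $B^{(\nu)}=B^{(\nu-1)}R^{(\nu)}$. Return $B$ = the non-zero columns of $B^{(N)}$, $N$ the first index with $CB^{(N)}=0$. *)

theory Defs
  imports "Jordan_Normal_Form.Matrix"
begin

text \<open>Multi-patch indexing: K patches, patch k has nsz k basis functions.
  The global (concatenated) index of local function i of patch k is offset nsz k + i.\<close>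

definition offset :: "(nat \<Rightarrow> nat) \<Rightarrow> nat \<Rightarrow> nat" where
  "offset nsz k = (\<Sum>k'<k. nsz k')"

definition npw :: "nat \<Rightarrow> (nat \<Rightarrow> nat) \<Rightarrow> nat" where
  "npw K nsz = (\<Sum>k<K. nsz k)"

text \<open>A constraint row: u_i^(k) - sum_j E_j u_j^(l) = 0, with k, l distinct patches,
  E nonnegative with row sum 1 (knot insertion coefficients).\<close>

definition constraint_row ::
  "nat \<Rightarrow> (nat \<Rightarrow> nat) \<Rightarrow> nat \<Rightarrow> nat \<Rightarrow> nat \<Rightarrow> (nat \<Rightarrow> real) \<Rightarrow> real vec" where
  "constraint_row K nsz k l i E =
     vec (npw K nsz) (\<lambda>g. (if g = offset nsz k + i then 1 else 0)
        - (\<Sum>j<nsz l. if g = offset nsz l + j then E j else 0))"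

definition is_constraint_matrix :: "nat \<Rightarrow> (nat \<Rightarrow> nat) \<Rightarrow> real mat \<Rightarrow> bool" where
  "is_constraint_matrix K nsz C \<longleftrightarrow>
     dim_col C = npw K nsz \<and>
     (\<forall>r < dim_row C. \<exists>k l i E. k < K \<and> l < K \<and> k \<noteq> l \<and> i < nsz k \<and>
        (\<forall>j. 0 \<le> E j) \<and> (\<Sum>j<nsz l. E j) = 1 \<and>
        row C r = constraint_row K nsz k l i E)"

definition Fset :: "real mat \<Rightarrow> nat \<Rightarrow> nat set" where
  "Fset D m = {n. n < dim_col D \<and> D $$ (m, n) \<noteq> 0 \<and>
                  (\<forall>j < dim_col D. j \<noteq> n \<longrightarrow> D $$ (m, n) * D $$ (m, j) \<le> 0)}"

text \<open>R = I - (1 / (e_m^T D e_n)) e_n e_m^T D, where D = C B^(nu-1).\<close>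

definition Rstep :: "real mat \<Rightarrow> nat \<Rightarrow> nat \<Rightarrow> real mat" where
  "Rstep D m n = 1\<^sub>m (dim_col D) -
     mat (dim_col D) (dim_col D) (\<lambda>(a, b). if a = n then D $$ (m, b) / D $$ (m, n) else 0)"

text \<open>B^(nu); piv nu = (m_nu, n_nu) is the pivot chosen in step nu (nu \<ge> 1).\<close>

fun Bseq :: "real mat \<Rightarrow> (nat \<Rightarrow> nat \<times> nat) \<Rightarrow> nat \<Rightarrow> real mat" where
  "Bseq C piv 0 = 1\<^sub>m (dim_col C)"
| "Bseq C piv (Suc v) =
     Bseq C piv v * Rstep (C * Bseq C piv v) (fst (piv (Suc v))) (snd (piv (Suc v)))"

definition nonzero_cols :: "'a::zero mat \<Rightarrow> nat set" where
  "nonzero_cols M = {j. j < dim_col M \<and> col M j \<noteq> 0\<^sub>v (dim_row M)}"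

definition keep_nonzero_cols :: "'a::zero mat \<Rightarrow> 'a mat" where
  "keep_nonzero_cols M =
     mat (dim_row M) (card (nonzero_cols M))
         (\<lambda>(i, c). M $$ (i, sorted_list_of_set (nonzero_cols M) ! c))"

end

theory Submission
  imports Defs
begin

definition rsum :: "real mat \<Rightarrow> nat \<Rightarrow> real" where
  "rsum M i = (\<Sum>j<dim_col M. M $$ (i, j))"

lemma rsum_mult:
  assumes A: "A \<in> carrier_mat nr nc" and B: "B \<in> carrier_mat nc p"
    and rs: "\<And>k. k < nc \<Longrightarrow> rsum B k = c" and i: "i < nr"
  shows "rsum (A * B) i = c * rsum A i"
proof -
  have "rsum (A * B) i = (\<Sum>j<p. \<Sum>k<nc. A $$ (i, k) * B $$ (k, j))"
    unfolding rsum_def using A B i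
    by (intro sum.cong) (auto simp: scalar_prod_def atLeast0LessThan)
  also have "\<dots> = (\<Sum>k<nc. A $$ (i, k) * rsum B k)"
    by (subst sum.swap) (simp add: rsum_def sum_distrib_left carrier_matD[OF B])
  also have "\<dots> = c * rsum A i"
    using rs A by (simp add: rsum_def sum_distrib_left mult.commute)
  finally show ?thesis .
qed

lemma Bseq_carrier: "Bseq C piv v \<in> carrier_mat (dim_col C) (dim_col C)"
  by (induction v) (auto simp: Rstep_def)

lemma offset_bound:
  assumes "l < K" "j < nsz l" shows "offset nsz l + j < npw K nsz"
proof -
  have "offset nsz l + j < (\<Sum>k'<Suc l. nsz k')" using assms by (simp add: offset_def)
  also have "\<dots> \<le> (\<Sum>k<K. nsz k)" using assms by (intro sum_mono2) auto
  finally show ?thesis by (simp add: npw_def)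
qed

lemma constraint_rsum:
  assumes constr: "is_constraint_matrix K nsz C" and r: "r < dim_row C"
  shows "rsum C r = 0"
proof -
  obtain k l i E where kl: "k < K" "l < K" "i < nsz k" "(\<Sum>j<nsz l. E j) = 1"
    and row: "row C r = constraint_row K nsz k l i E"
    using constr r unfolding is_constraint_matrix_def by blast
  let ?n = "npw K nsz"
  have dc: "dim_col C = ?n" using constr by (simp add: is_constraint_matrix_def)
  have "rsum C r = (\<Sum>g<?n. row C r $ g)" unfolding rsum_def using dc r by simp
  also have "\<dots> = (\<Sum>g<?n. (if g = offset nsz k + i then 1 else 0)
        - (\<Sum>j<nsz l. if g = offset nsz l + j then E j else 0))"
    unfolding row constraint_row_def by simp
  also have "\<dots> = (\<Sum>g<?n. (if g = offset nsz k + i then 1 else 0))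
        - (\<Sum>j<nsz l. \<Sum>g<?n. if g = offset nsz l + j then E j else 0)"
    by (subst sum_subtractf) (rule arg_cong[where f="\<lambda>x. _ - x"], rule sum.swap)
  also have "(\<Sum>g<?n. (if g = offset nsz k + i then 1 else 0)) = (1::real)"
    using offset_bound[of k K i nsz] kl by simp
  also have "(\<Sum>j<nsz l. \<Sum>g<?n. if g = offset nsz l + j then E j else 0) = (\<Sum>j<nsz l. E j)"
    using offset_bound[of l K _ nsz] kl by (intro sum.cong) auto
  finally show ?thesis using kl(4) by simp
qed

theorem mainTheorem6:
  fixes K :: nat and nsz :: "nat \<Rightarrow> nat" and C :: "real mat"
    and piv :: "nat \<Rightarrow> nat \<times> nat" and N :: nat
  assumes constr: "is_constraint_matrix K nsz C"
    and pivots: "\<And>v. 1 \<le> v \<Longrightarrow> v \<le> N \<Longrightarrow>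
                   fst (piv v) < dim_row C \<and>
                   snd (piv v) \<in> Fset (C * Bseq C piv (v - 1)) (fst (piv v))"
    and not_done: "\<And>v. v < N \<Longrightarrow> C * Bseq C piv v \<noteq> 0\<^sub>m (dim_row C) (npw K nsz)"
    and terminated: "C * Bseq C piv N = 0\<^sub>m (dim_row C) (npw K nsz)"
  shows "\<forall>i < dim_row (keep_nonzero_cols (Bseq C piv N)).
           (\<Sum>c < dim_col (keep_nonzero_cols (Bseq C piv N)).
              keep_nonzero_cols (Bseq C piv N) $$ (i, c)) = 1"
proof -
  let ?n = "dim_col C"
  have inv: "v \<le> N \<Longrightarrow> \<forall>i < ?n. rsum (Bseq C piv v) i = 1" for v
  proof (induction v)
    case 0
    then show ?case by (simp add: rsum_def)
  next
    case (Suc v)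
    let ?B = "Bseq C piv v"
    let ?D = "C * ?B"
    let ?m = "fst (piv (Suc v))"
    let ?p = "snd (piv (Suc v))"
    have IH: "\<And>i. i < ?n \<Longrightarrow> rsum ?B i = 1" using Suc by simp
    have Bc: "?B \<in> carrier_mat ?n ?n" by (rule Bseq_carrier)
    have m: "?m < dim_row C" using pivots[of "Suc v"] Suc.prems by simp
    have Dm: "rsum ?D ?m = 0"
      using rsum_mult[OF carrier_matI[of C "dim_row C" ?n] Bc IH m] constraint_rsum[OF constr m]
      by simp
    have Rc: "Rstep ?D ?m ?p \<in> carrier_mat ?n ?n" using Bc unfolding Rstep_def by (intro minus_carrier_mat) auto
    have Rs: "rsum (Rstep ?D ?m ?p) k = 1" if k: "k < ?n" for k
    proof -
      have dD: "dim_col ?D = ?n" using Bc by simp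
      have "rsum (Rstep ?D ?m ?p) k = (\<Sum>b<?n. (if k = b then 1 else 0)
          - (if k = ?p then ?D $$ (?m, b) / ?D $$ (?m, ?p) else 0))"
        unfolding rsum_def Rstep_def dD using k by (intro sum.cong) auto
      also have "\<dots> = 1 - (if k = ?p then rsum ?D ?m / ?D $$ (?m, ?p) else 0)"
        using k Bc by (simp add: sum_subtractf rsum_def dD sum_divide_distrib)
      finally show ?thesis using Dm by simp
    qed
    show ?case
      using rsum_mult[OF Bc Rc Rs] IH by simp
  qed
  let ?M = "Bseq C piv N"
  let ?S = "nonzero_cols ?M"
  have Mc: "?M \<in> carrier_mat ?n ?n" by (rule Bseq_carrier)
  show ?thesis
  proof (intro allI impI)
    fix i assume i: "i < dim_row (keep_nonzero_cols ?M)"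
    hence i': "i < ?n" using Mc by (simp add: keep_nonzero_cols_def)
    have fin: "finite ?S" by (simp add: nonzero_cols_def)
    have sub: "?S \<subseteq> {..<?n}" using Mc by (auto simp: nonzero_cols_def)
    let ?L = "sorted_list_of_set ?S"
    have "(\<Sum>c < dim_col (keep_nonzero_cols ?M). keep_nonzero_cols ?M $$ (i, c))
        = (\<Sum>c < length ?L. ?M $$ (i, ?L ! c))"
      using i i' Mc fin by (intro sum.cong) (auto simp: keep_nonzero_cols_def)
    also have "\<dots> = (\<Sum>j \<in> ?S. ?M $$ (i, j))"
    proof -
      have "(\<Sum>j \<in> set ?L. ?M $$ (i, j)) = (\<Sum>c < length ?L. ?M $$ (i, ?L ! c))"
        by (subst sum.distinct_set_conv_list[OF distinct_sorted_list_of_set])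
           (simp add: sum_list_sum_nth atLeast0LessThan)
      thus ?thesis using fin by simp
    qed
    also have "\<dots> = (\<Sum>j<?n. ?M $$ (i, j))"
    proof (rule sum.mono_neutral_left[OF _ sub])
      show "\<forall>j\<in>{..<?n} - ?S. ?M $$ (i, j) = 0"
      proof
        fix j assume j: "j \<in> {..<?n} - ?S"
        hence "col ?M j = 0\<^sub>v ?n" using Mc by (auto simp: nonzero_cols_def)
        hence "col ?M j $ i = 0" using i' by simp
        thus "?M $$ (i, j) = 0" using i' j Mc by simp
      qed
    qed simp
    also have "\<dots> = rsum ?M i" using Mc by (simp add: rsum_def)
    also have "\<dots> = 1" using inv[of N] i' by simp
    finally show "(\<Sum>c < dim_col (keep_nonzero_cols ?M). keep_nonzero_cols ?M $$ (i, c)) = 1" .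
  qed
qed

end
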